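(* Let $X$ be a finite set, $C_X$ a facegram over $X$ with filtration $F_X=\Psi(C_X)$, and let $S$ be any collection of nonempty subsets of $X$ with $\mathbf{s}(C_X)\subset S\subset\mathbf{pow}(X)$. Then $$\mathbf{mgm}(C_X)=\Big\{\Big\{\Big[F_X(\sigma),\min_{\sigma\subsetneq\tau\in S}F_X(\tau)\Big)\ \Big|\ \sigma\in S\Big\}\Big\},$$ where empty intervals are discarded and a minimum over the empty set is $+\infty$.
   Context: $\mathbf{pow}(X)$ is the set of nonempty subsets of $X$. A facegram over $X$ is a monotone map $C_X$ from $\mathbb{R}$ to face-sets of $X$ (families of pairwise inclusion-incomparable nonempty subsets, ordered by: each face of one lies in a face of the other) which equals $\{X\}$ for large $t$ and, for some reals $a_1<\dots<a_n$, is $\emptyset$ on $(-\infty,a_1)$ and constant on each $[a_i,a_{i+1})$ ($a_{n+1}:=\infty$). $\Psi(C_X)(S):=\min\{t\mid S\text{ is contained in some face of }C_X(t)\}$. $\mathbf{s}(C_X):=\{\sigma\mid\sigma\in C_X(t)\text{ for some }t\}$. For nonempty $\sigma$, $I_\sigma:=\{t\mid\sigma\in C_X(t)\}$, and $\mathbf{mgm}(C_X)$ is the multiset of nonempty $I_\sigma$ over all nonempty $\sigma\subset X$. *)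

theory Defs
  imports Complex_Main "HOL-Library.Multiset"
begin

definition face_set :: "'a set \<Rightarrow> 'a set set \<Rightarrow> bool" where
  "face_set X A \<longleftrightarrow> (\<forall>\<sigma>\<in>A. \<sigma> \<noteq> {} \<and> \<sigma> \<subseteq> X) \<and>
     (\<forall>\<sigma>\<in>A. \<forall>\<tau>\<in>A. \<sigma> \<subseteq> \<tau> \<longrightarrow> \<sigma> = \<tau>)"

definition face_le :: "'a set set \<Rightarrow> 'a set set \<Rightarrow> bool" where
  "face_le A B \<longleftrightarrow> (\<forall>\<sigma>\<in>A. \<exists>\<tau>\<in>B. \<sigma> \<subseteq> \<tau>)"

definition facegram :: "'a set \<Rightarrow> (real \<Rightarrow> 'a set set) \<Rightarrow> bool" where
  "facegram X C \<longleftrightarrow>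
     (\<forall>t. face_set X (C t)) \<and>
     (\<forall>s t. s \<le> t \<longrightarrow> face_le (C s) (C t)) \<and>
     (\<exists>T. \<forall>t\<ge>T. C t = {X}) \<and>
     (\<exists>as::real list. as \<noteq> [] \<and> sorted_wrt (<) as \<and>
        (\<forall>t. t < hd as \<longrightarrow> C t = {}) \<and>
        (\<forall>i<length as. \<forall>t. as ! i \<le> t \<and> (Suc i < length as \<longrightarrow> t < as ! Suc i)
              \<longrightarrow> C t = C (as ! i)))"

definition Psi :: "(real \<Rightarrow> 'a set set) \<Rightarrow> 'a set \<Rightarrow> real" where
  "Psi C S = (LEAST t. \<exists>\<sigma>\<in>C t. S \<subseteq> \<sigma>)"

definition simplices :: "(real \<Rightarrow> 'a set set) \<Rightarrow> 'a set set" where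
  "simplices C = {\<sigma>. \<exists>t. \<sigma> \<in> C t}"

definition life :: "(real \<Rightarrow> 'a set set) \<Rightarrow> 'a set \<Rightarrow> real set" where
  "life C \<sigma> = {t. \<sigma> \<in> C t}"

definition mgm :: "'a set \<Rightarrow> (real \<Rightarrow> 'a set set) \<Rightarrow> real set multiset" where
  "mgm X C = image_mset (life C)
     (filter_mset (\<lambda>\<sigma>. life C \<sigma> \<noteq> {}) (mset_set (Pow X - {{}})))"

definition death_interval :: "('a set \<Rightarrow> real) \<Rightarrow> 'a set set \<Rightarrow> 'a set \<Rightarrow> real set" where
  "death_interval F S \<sigma> =
     (if {\<tau>\<in>S. \<sigma> \<subset> \<tau>} = {} then {F \<sigma>..}
      else {F \<sigma> ..< Min (F ` {\<tau>\<in>S. \<sigma> \<subset> \<tau>})})"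

end

theory Submission
  imports Defs
begin

definition cov :: "(real \<Rightarrow> 'a set set) \<Rightarrow> 'a set \<Rightarrow> real \<Rightarrow> bool" where
  "cov C \<sigma> t \<longleftrightarrow> (\<exists>\<rho>\<in>C t. \<sigma> \<subseteq> \<rho>)"

lemma cov_mono:
  assumes "facegram X C" "cov C \<sigma> s" "s \<le> t"
  shows "cov C \<sigma> t"
proof -
  from assms(1,3) have "face_le (C s) (C t)" unfolding facegram_def by blast
  with assms(2) show ?thesis unfolding cov_def face_le_def by (meson order_trans)
qed

lemma piece:
  fixes as :: "real list"
  assumes "sorted_wrt (<) as" "as \<noteq> []"
    and pc: "\<forall>i<length as. \<forall>t. as ! i \<le> t \<and> (Suc i < length as \<longrightarrow> t < as ! Suc i)
              \<longrightarrow> C t = C (as ! i)"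
    and "hd as \<le> t"
  shows "\<exists>i<length as. as ! i \<le> t \<and> C t = C (as ! i)"
proof -
  let ?I = "{i. i < length as \<and> as ! i \<le> t}"
  have fin: "finite ?I" by simp
  have "0 \<in> ?I" using assms(2,4) by (simp add: hd_conv_nth)
  hence ne: "?I \<noteq> {}" by blast
  define i where "i = Max ?I"
  have iI: "i \<in> ?I" unfolding i_def using fin ne by (rule Max_in)
  have "Suc i < length as \<longrightarrow> t < as ! Suc i"
  proof
    assume "Suc i < length as"
    show "t < as ! Suc i"
    proof (rule ccontr)
      assume "\<not> t < as ! Suc i"
      hence "as ! Suc i \<le> t" by linarith
      hence "Suc i \<in> ?I" using \<open>Suc i < length as\<close> by simp
      hence "Suc i \<le> i" unfolding i_def using fin by (simp add: Max_ge)
      thus False by simp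
    qed
  qed
  with iI pc show ?thesis by blast
qed

lemma cov_Psi:
  assumes fg: "facegram X C" and ex: "cov C \<sigma> t0"
  shows "\<forall>t. cov C \<sigma> t \<longleftrightarrow> Psi C \<sigma> \<le> t"
proof -
  from fg obtain as :: "real list" where as: "as \<noteq> []" "sorted_wrt (<) as"
     "\<forall>t. t < hd as \<longrightarrow> C t = {}"
     "\<forall>i<length as. \<forall>t. as ! i \<le> t \<and> (Suc i < length as \<longrightarrow> t < as ! Suc i)
              \<longrightarrow> C t = C (as ! i)"
    unfolding facegram_def by blast
  have key: "\<exists>a\<in>set as. a \<le> t \<and> cov C \<sigma> a" if "cov C \<sigma> t" for t
  proof -
    have "hd as \<le> t"
    proof (rule ccontr)
      assume "\<not> hd as \<le> t"
      hence "C t = {}" using as(3) by simp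
      with that show False unfolding cov_def by simp
    qed
    then obtain i where "i < length as" "as ! i \<le> t" "C t = C (as ! i)"
      using piece[OF as(2) as(1) as(4)] by blast
    thus ?thesis using that unfolding cov_def by (metis nth_mem)
  qed
  define A where "A = {a\<in>set as. cov C \<sigma> a}"
  have finA: "finite A" unfolding A_def by simp
  have neA: "A \<noteq> {}" using key[OF ex] unfolding A_def by blast
  define m where "m = Min A"
  have mA: "m \<in> A" unfolding m_def using finA neA by (rule Min_in)
  have iff: "cov C \<sigma> t \<longleftrightarrow> m \<le> t" for t
  proof
    assume "cov C \<sigma> t"
    then obtain a where a: "a \<in> set as" "a \<le> t" "cov C \<sigma> a" using key by blast
    hence "m \<le> a" unfolding m_def using finA by (intro Min_le) (auto simp: A_def)
    thus "m \<le> t" using a by simp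
  next
    assume "m \<le> t"
    moreover have "cov C \<sigma> m" using mA unfolding A_def by simp
    ultimately show "cov C \<sigma> t" using cov_mono[OF fg] by blast
  qed
  have "Psi C \<sigma> = m"
    unfolding Psi_def
    apply (rule Least_equality)
    using iff unfolding cov_def by auto
  with iff show ?thesis by simp
qed

lemma cov_X:
  assumes fg: "facegram X C" and "\<sigma> \<subseteq> X"
  shows "\<exists>t. cov C \<sigma> t"
proof -
  from fg obtain T where "\<forall>t\<ge>T. C t = {X}" unfolding facegram_def by blast
  hence "C T = {X}" by simp
  thus ?thesis using assms(2) unfolding cov_def by auto
qed

theorem mainTheorem12:
  fixes X :: "'a set" and C :: "real \<Rightarrow> 'a set set" and S :: "'a set set"
  assumes "finite X"
    and "facegram X C"
    and "simplices C \<subseteq> S"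
    and "S \<subseteq> Pow X - {{}}"
  shows "mgm X C = image_mset (death_interval (Psi C) S)
           (filter_mset (\<lambda>\<sigma>. death_interval (Psi C) S \<sigma> \<noteq> {}) (mset_set S))"
proof -
  note fg = assms(2)
  have finS: "finite S" using assms(1,4) by (meson finite_Diff finite_Pow_iff finite_subset)
  have fs: "face_set X (C t)" for t using fg unfolding facegram_def by blast
  have covP: "cov C \<rho> t \<longleftrightarrow> Psi C \<rho> \<le> t" if "\<rho> \<subseteq> X" for \<rho> t
    using cov_Psi[OF fg] cov_X[OF fg that] by blast
  have mem: "\<sigma> \<in> C t \<longleftrightarrow> cov C \<sigma> t \<and> \<not> (\<exists>\<rho>\<in>S. \<sigma> \<subset> \<rho> \<and> cov C \<rho> t)"
    for \<sigma> t
  proof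
    assume s: "\<sigma> \<in> C t"
    show "cov C \<sigma> t \<and> \<not> (\<exists>\<rho>\<in>S. \<sigma> \<subset> \<rho> \<and> cov C \<rho> t)"
    proof
      show "cov C \<sigma> t" using s unfolding cov_def by blast
      show "\<not> (\<exists>\<rho>\<in>S. \<sigma> \<subset> \<rho> \<and> cov C \<rho> t)"
      proof
        assume "\<exists>\<rho>\<in>S. \<sigma> \<subset> \<rho> \<and> cov C \<rho> t"
        then obtain \<rho> \<rho>' where r: "\<sigma> \<subset> \<rho>" "\<rho> \<subseteq> \<rho>'" "\<rho>' \<in> C t"
          unfolding cov_def by blast
        have inc: "\<forall>a\<in>C t. \<forall>b\<in>C t. a \<subseteq> b \<longrightarrow> a = b" using fs[of t] unfolding face_set_def by blast
        have "\<sigma> \<subseteq> \<rho>'" using r by blast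
        hence "\<sigma> = \<rho>'" using inc s r(3) by blast
        with r show False by blast
      qed
    qed
  next
    assume h: "cov C \<sigma> t \<and> \<not> (\<exists>\<rho>\<in>S. \<sigma> \<subset> \<rho> \<and> cov C \<rho> t)"
    then obtain \<rho> where r: "\<rho> \<in> C t" "\<sigma> \<subseteq> \<rho>" unfolding cov_def by blast
    have "\<rho> \<in> S" using r(1) assms(3) unfolding simplices_def by blast
    moreover have "cov C \<rho> t" using r(1) unfolding cov_def by blast
    ultimately have "\<sigma> = \<rho>" using h r(2) by (meson psubsetI)
    with r show "\<sigma> \<in> C t" by simp
  qed
  have lifeeq: "life C \<sigma> = death_interval (Psi C) S \<sigma>" if "\<sigma> \<subseteq> X" for \<sigma>
  proof -
    have l: "life C \<sigma> = {t. Psi C \<sigma> \<le> t \<and> (\<forall>\<rho>\<in>S. \<sigma> \<subset> \<rho> \<longrightarrow> t < Psi C \<rho>)}"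
    proof -
      have c1: "cov C \<sigma> t \<longleftrightarrow> Psi C \<sigma> \<le> t" for t using covP that by blast
      have c2: "(\<exists>\<rho>\<in>S. \<sigma> \<subset> \<rho> \<and> cov C \<rho> t) \<longleftrightarrow> \<not> (\<forall>\<rho>\<in>S. \<sigma> \<subset> \<rho> \<longrightarrow> t < Psi C \<rho>)" for t
      proof -
        have "cov C \<rho> t \<longleftrightarrow> \<not> t < Psi C \<rho>" if "\<rho> \<in> S" for \<rho>
          using covP[of \<rho> t] that assms(4) by auto
        thus ?thesis by blast
      qed
      show ?thesis unfolding life_def mem c1 c2 by simp
    qed
    show ?thesis
    proof (cases "{\<tau>\<in>S. \<sigma> \<subset> \<tau>} = {}")
      case True
      then show ?thesis unfolding l death_interval_def by auto
    next
      case False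
      have f: "finite (Psi C ` {\<tau>\<in>S. \<sigma> \<subset> \<tau>})" using finS by simp
      have "t < Min (Psi C ` {\<tau>\<in>S. \<sigma> \<subset> \<tau>}) \<longleftrightarrow> (\<forall>\<rho>\<in>S. \<sigma> \<subset> \<rho> \<longrightarrow> t < Psi C \<rho>)" for t
        using Min_gr_iff[OF f] False by auto
      then show ?thesis unfolding l death_interval_def using False by auto
    qed
  qed
  have setsq: "{\<sigma> \<in> Pow X - {{}}. life C \<sigma> \<noteq> {}} = {\<sigma> \<in> S. death_interval (Psi C) S \<sigma> \<noteq> {}}"
  proof (intro set_eqI iffI)
    fix \<sigma> assume a: "\<sigma> \<in> {\<sigma> \<in> Pow X - {{}}. life C \<sigma> \<noteq> {}}"
    hence "\<sigma> \<in> simplices C" unfolding life_def simplices_def by auto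
    with a show "\<sigma> \<in> {\<sigma> \<in> S. death_interval (Psi C) S \<sigma> \<noteq> {}}"
      using assms(3) lifeeq by auto
  next
    fix \<sigma> assume a: "\<sigma> \<in> {\<sigma> \<in> S. death_interval (Psi C) S \<sigma> \<noteq> {}}"
    thus "\<sigma> \<in> {\<sigma> \<in> Pow X - {{}}. life C \<sigma> \<noteq> {}}" using assms(4) lifeeq by auto
  qed
  have finP: "finite (Pow X - {{}})" using assms(1) by simp
  show ?thesis
    unfolding mgm_def filter_mset_mset_set[OF finP] filter_mset_mset_set[OF finS] setsq
    apply (rule image_mset_cong)
    using finS assms(4) lifeeq by auto
qed

end
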